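(* Consider the Diophantine equation $n^2-(6s-1)n+6s^2=0$ in positive integers $(n,s)$. The maps $\iota_1(n,s)=(n,n-s)$ and $\iota_2(n,s)=(6s-1-n,s)$ send positive integer solutions to positive integer solutions, and the set of all positive integer solutions is exactly the set of pairs obtained from $(2,1)$ by finitely many applications of $\iota_1$ and $\iota_2$; that is, the solutions are $(2,1),(3,1),(3,2),(8,2),(8,6),(27,6),(27,21),(98,21),(98,77),(363,77),(363,286),\dots$, obtained by alternately applying $\iota_2$ and $\iota_1$ starting from $(2,1)$. *)

theory Defs
  imports Main
begin

definition is_sol :: "int \<times> int \<Rightarrow> bool" where
  "is_sol p \<longleftrightarrow> (case p of (n, s) \<Rightarrow> n > 0 \<and> s > 0 \<and> n^2 - (6*s - 1)*n + 6*s^2 = 0)"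

definition iota1 :: "int \<times> int \<Rightarrow> int \<times> int" where
  "iota1 p = (case p of (n, s) \<Rightarrow> (n, n - s))"

definition iota2 :: "int \<times> int \<Rightarrow> int \<times> int" where
  "iota2 p = (case p of (n, s) \<Rightarrow> (6*s - 1 - n, s))"

inductive_set orbit21 :: "(int \<times> int) set" where
  base: "(2, 1) \<in> orbit21"
| app1: "p \<in> orbit21 \<Longrightarrow> iota1 p \<in> orbit21"
| app2: "p \<in> orbit21 \<Longrightarrow> iota2 p \<in> orbit21"

end

theory Submission
  imports Defs
begin

lemma sol_iff: "is_sol (n,s) \<longleftrightarrow> n > 0 \<and> s > 0 \<and> n^2 - (6*s - 1)*n + 6*s^2 = 0"
  by (simp add: is_sol_def)

lemma i1: "is_sol p \<Longrightarrow> is_sol (iota1 p)"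
proof (cases p)
  case (Pair n s)
  assume h: "is_sol p"
  hence e: "n^2 - (6*s - 1)*n + 6*s^2 = 0" and p: "n>0" "s>0" using Pair by (auto simp: sol_iff)
  have "n > s"
  proof (rule ccontr)
    assume "\<not> n > s"
    hence a: "n*(s*6) \<le> s*(s*6)" using p by (intro mult_right_mono) auto
    have b: "n*n > 0" using p by simp
    have "n + (n * n + s * (s * 6)) = n * (s * 6)" using e by (simp add: power2_eq_square algebra_simps)
    thus False using a b p by linarith
  qed
  moreover have "n^2 - (6*(n-s) - 1)*n + 6*(n-s)^2 = 0" using e by (simp add: power2_eq_square algebra_simps)
  ultimately show ?thesis using Pair p by (simp add: sol_iff iota1_def)
qed

lemma i2: "is_sol p \<Longrightarrow> is_sol (iota2 p)"
proof (cases p)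
  case (Pair n s)
  assume h: "is_sol p"
  hence e: "n^2 - (6*s - 1)*n + 6*s^2 = 0" and p: "n>0" "s>0" using Pair by (auto simp: sol_iff)
  have "n*(6*s-1-n) = 6*s^2" using e by (simp add: power2_eq_square algebra_simps)
  moreover have "6*s^2 > 0" using p by simp
  ultimately have "6*s-1-n > 0" using p by (metis zero_less_mult_pos)
  moreover have "(6*s-1-n)^2 - (6*s - 1)*(6*s-1-n) + 6*s^2 = 0" using e by (simp add: power2_eq_square algebra_simps)
  ultimately show ?thesis using Pair p by (simp add: sol_iff iota2_def)
qed

lemma basecase:
  assumes e: "n^2 - (6*s - 1)*n + 6*s^2 = 0" and p: "n>0" "s>0"
    and a: "2*n \<le> 6*s - 1" "2*s \<le> (n::int)"
  shows "n = 2 \<and> s = 1"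
proof -
  have f: "(n-2*s)*(n-3*s) = n*(s-1)" using e by (simp add: power2_eq_square algebra_simps)
  have "(n-2*s)*(n-3*s) \<le> 0" using a by (intro mult_nonneg_nonpos) auto
  moreover have "n*(s-1) \<ge> 0" using p by simp
  ultimately have "n*(s-1) = 0" "(n-2*s)*(n-3*s) = 0" using f by auto
  thus ?thesis using p a by auto
qed

lemma orb: "is_sol (n,s) \<Longrightarrow> (n,s) \<in> orbit21"
proof (induction "nat (n+s)" arbitrary: n s rule: less_induct)
  case less
  from less.prems have e: "n^2 - (6*s - 1)*n + 6*s^2 = 0" and p: "n>0" "s>0" by (auto simp: sol_iff)
  show ?case
  proof (cases "2*n > 6*s - 1")
    case True
    have s2: "is_sol (6*s-1-n, s)" using i2[OF less.prems] by (simp add: iota2_def)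
    hence "6*s-1-n > 0" by (simp add: sol_iff)
    hence "(6*s-1-n, s) \<in> orbit21" using less.hyps[OF _ s2] True p by simp
    from orbit21.app2[OF this] show ?thesis by (simp add: iota2_def)
  next
    case F: False
    show ?thesis
    proof (cases "2*s > n")
      case True
      have s2: "is_sol (n, n-s)" using i1[OF less.prems] by (simp add: iota1_def)
      hence "(n, n-s) \<in> orbit21" using less.hyps[OF _ s2] True p by simp
      from orbit21.app1[OF this] show ?thesis by (simp add: iota1_def)
    next
      case False
      with F basecase[OF e p] have "n = 2 \<and> s = 1" by simp
      thus ?thesis using orbit21.base by simp
    qed
  qed
qed

lemma orb2: "p \<in> orbit21 \<Longrightarrow> is_sol p"
  by (induction rule: orbit21.induct) (auto simp: sol_iff intro: i1 i2)

theorem mainTheorem10: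
  shows "(\<forall>p. is_sol p \<longrightarrow> is_sol (iota1 p))
       \<and> (\<forall>p. is_sol p \<longrightarrow> is_sol (iota2 p))
       \<and> {p. is_sol p} = orbit21"
  using i1 i2 orb orb2 by auto

end
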